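(* Let $\alpha>0$ and $\beta\in\mathbb{R}$ satisfy one of: $\beta<\alpha<1$; or $\beta<1<\alpha$; or $\beta<\alpha=1$. Then the essential norm of the $\beta$-Ces\`aro operator $C_\beta:\mathcal{B}_\alpha^0\to\mathcal{B}_\alpha^0$ is $0$.
   Context: $\mathbb{D}=\{z\in\mathbb{C}:|z|<1\}$. For $\alpha>0$, the $\alpha$-Bloch space $\mathcal{B}_\alpha$ is the space of analytic functions $f$ on $\mathbb{D}$ with $\|f\|_{\mathcal{B}_\alpha}:=\sup_{z\in\mathbb{D}}(1-|z|^2)^\alpha|f'(z)|<\infty$. $\mathcal{B}_\alpha^0=\{f\in\mathcal{B}_\alpha: f(0)=0\}$, normed by $\|\cdot\|_{\mathcal{B}_\alpha}$. For $\beta\in\mathbb{R}$, $C_\beta(f)(z)=\int_0^z \frac{f(w)}{w(1-w)^\beta}\,dw$ (principal branch). The essential norm of a bounded operator $T:X\to Y$ between Banach spaces is $\|T\|_e=\inf\{\|T+K\|: K:X\to Y \text{ compact}\}$, $\|\cdot\|$ the operator norm. *)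

theory Defs
  imports "HOL-Complex_Analysis.Complex_Analysis"
begin

text \<open>Functions on the unit disc are modelled as complex \<Rightarrow> complex; only their
values on ball 0 1 matter.\<close>

definition bloch_norm :: "real \<Rightarrow> (complex \<Rightarrow> complex) \<Rightarrow> real" where
  "bloch_norm \<alpha> f = (SUP z\<in>ball 0 1. (1 - (cmod z)^2) powr \<alpha> * cmod (deriv f z))"

definition bloch_space :: "real \<Rightarrow> (complex \<Rightarrow> complex) set" where
  "bloch_space \<alpha> = {f. f holomorphic_on ball 0 1 \<and>
      bdd_above ((\<lambda>z. (1 - (cmod z)^2) powr \<alpha> * cmod (deriv f z)) ` ball 0 1)}"

definition bloch0 :: "real \<Rightarrow> (complex \<Rightarrow> complex) set" where
  "bloch0 \<alpha> = {f \<in> bloch_space \<alpha>. f 0 = 0}"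

definition cesaro :: "real \<Rightarrow> (complex \<Rightarrow> complex) \<Rightarrow> (complex \<Rightarrow> complex)" where
  "cesaro \<beta> f z = contour_integral (linepath 0 z)
      (\<lambda>w. f w / (w * (1 - w) powr (complex_of_real \<beta>)))"

text \<open>Operators on B_alpha^0: maps of functions that are well defined on the quotient
(depend only on values in the disc), map B_alpha^0 into itself and are linear.\<close>
definition op_on_bloch0 :: "real \<Rightarrow> ((complex \<Rightarrow> complex) \<Rightarrow> (complex \<Rightarrow> complex)) \<Rightarrow> bool" where
  "op_on_bloch0 \<alpha> T \<longleftrightarrow>
     (\<forall>f\<in>bloch0 \<alpha>. T f \<in> bloch0 \<alpha>) \<and>
     (\<forall>f\<in>bloch0 \<alpha>. \<forall>g\<in>bloch0 \<alpha>. (\<forall>z\<in>ball 0 1. f z = g z) \<longrightarrow> (\<forall>z\<in>ball 0 1. T f z = T g z)) \<and>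
     (\<forall>f\<in>bloch0 \<alpha>. \<forall>g\<in>bloch0 \<alpha>. \<forall>a b::complex. \<forall>z\<in>ball 0 1.
         T (\<lambda>w. a * f w + b * g w) z = a * T f z + b * T g z)"

definition bounded_op :: "real \<Rightarrow> ((complex \<Rightarrow> complex) \<Rightarrow> (complex \<Rightarrow> complex)) \<Rightarrow> bool" where
  "bounded_op \<alpha> T \<longleftrightarrow> op_on_bloch0 \<alpha> T \<and>
     (\<exists>M. \<forall>f\<in>bloch0 \<alpha>. bloch_norm \<alpha> (T f) \<le> M * bloch_norm \<alpha> f)"

definition compact_op :: "real \<Rightarrow> ((complex \<Rightarrow> complex) \<Rightarrow> (complex \<Rightarrow> complex)) \<Rightarrow> bool" where
  "compact_op \<alpha> K \<longleftrightarrow> op_on_bloch0 \<alpha> K \<and>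
     (\<forall>s::nat \<Rightarrow> complex \<Rightarrow> complex. (\<forall>n. s n \<in> bloch0 \<alpha>) \<and> (\<exists>M. \<forall>n. bloch_norm \<alpha> (s n) \<le> M) \<longrightarrow>
        (\<exists>r g. strict_mono r \<and> g \<in> bloch0 \<alpha> \<and>
           (\<lambda>n. bloch_norm \<alpha> (\<lambda>z. K (s (r n)) z - g z)) \<longlonglongrightarrow> 0))"

definition op_norm :: "real \<Rightarrow> ((complex \<Rightarrow> complex) \<Rightarrow> (complex \<Rightarrow> complex)) \<Rightarrow> real" where
  "op_norm \<alpha> T = Sup {bloch_norm \<alpha> (T f) | f. f \<in> bloch0 \<alpha> \<and> bloch_norm \<alpha> f \<le> 1}"

definition ess_norm :: "real \<Rightarrow> ((complex \<Rightarrow> complex) \<Rightarrow> (complex \<Rightarrow> complex)) \<Rightarrow> real" where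
  "ess_norm \<alpha> T = Inf {op_norm \<alpha> (\<lambda>f z. T f z + K f z) | K. compact_op \<alpha> K}"

end

theory Submission
  imports Defs
begin

definition Qf :: "real \<Rightarrow> (complex \<Rightarrow> complex) \<Rightarrow> complex \<Rightarrow> complex" where
  "Qf \<beta> f w = (if w = 0 then deriv f 0 else f w / w) / (1 - w) powr (complex_of_real \<beta>)"

lemma one_minus_nonpos: "(w::complex) \<in> ball 0 1 \<Longrightarrow> 1 - w \<notin> \<real>\<^sub>\<le>\<^sub>0"
proof
  assume w: "w \<in> ball 0 1" and "1 - w \<in> \<real>\<^sub>\<le>\<^sub>0"
  then obtain r where r: "1 - w = of_real r" "r \<le> 0" by (auto simp: nonpos_Reals_def)
  then have "Re (1 - w) = r" by simp
  then have "Re (1 - w) \<le> 0" using r by simp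
  moreover have "Re w < 1" using w abs_Re_le_cmod[of w] by auto
  ultimately show False by simp
qed

lemma powr_nz: "(w::complex) \<in> ball 0 1 \<Longrightarrow> (1 - w) powr (complex_of_real \<beta>) \<noteq> 0"
  using one_minus_nonpos[of w] by (auto simp: powr_def)

lemma holQ:
  assumes hol: "f holomorphic_on ball 0 1" and f0: "f 0 = 0"
  shows "Qf \<beta> f holomorphic_on ball 0 1"
proof -
  have p: "(\<lambda>z. if z = 0 then deriv f 0 else (f z - f 0) / (z - 0)) holomorphic_on ball 0 1"
    by (rule pole_lemma[OF hol]) auto
  have p2: "(\<lambda>z. if z = 0 then deriv f 0 else f z / z) holomorphic_on ball 0 1"
  proof -
    have "(\<lambda>z. if z = 0 then deriv f 0 else (f z - f 0) / (z - 0)) = (\<lambda>z. if z = 0 then deriv f 0 else f z / z)"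
      using f0 by auto
    with p show ?thesis by simp
  qed
  have pw: "(\<lambda>w. (1 - w) powr (complex_of_real \<beta>)) holomorphic_on ball 0 1"
    by (intro holomorphic_on_powr holomorphic_intros) (use one_minus_nonpos in auto)
  show ?thesis unfolding Qf_def[abs_def]
    by (intro holomorphic_on_divide p2 pw) (use powr_nz in auto)
qed

lemma cesaro_eq:
  assumes z: "z \<in> ball 0 1"
  shows "cesaro \<beta> f z = contour_integral (linepath 0 z) (Qf \<beta> f)"
proof (cases "z = 0")
  case True then show ?thesis by (simp add: cesaro_def)
next
  case False
  show ?thesis unfolding cesaro_def
    by (rule contour_integral_spike_finite_simple_path[of "{0}"]) (use False in \<open>auto simp: Qf_def\<close>)
qed

lemma cesaro_deriv:
  assumes hol: "f holomorphic_on ball 0 1" and f0: "f 0 = 0" and z: "z \<in> ball 0 1"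
  shows "(cesaro \<beta> f has_field_derivative Qf \<beta> f z) (at z)"
proof -
  have hq: "Qf \<beta> f holomorphic_on ball 0 1" by (rule holQ[OF hol f0])
  have "((\<lambda>x. contour_integral (linepath 0 x) (Qf \<beta> f)) has_field_derivative Qf \<beta> f z) (at z within ball 0 1)"
  proof (rule triangle_contour_integrals_convex_primitive)
    show "continuous_on (ball 0 1) (Qf \<beta> f)" using hq holomorphic_on_imp_continuous_on by blast
    fix b c :: complex assume b: "b \<in> ball 0 1" and c: "c \<in> ball 0 1"
    have "(Qf \<beta> f has_contour_integral 0) (linepath 0 b +++ linepath b c +++ linepath c 0)"
    proof (rule Cauchy_theorem_convex_simple[OF hq])
      have "path_image (linepath 0 b +++ linepath b c +++ linepath c 0) \<subseteq> convex hull {0,b,c}"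
      proof -
        have "convex hull {0,b} \<subseteq> convex hull {0,b,c}" "convex hull {b,c} \<subseteq> convex hull {0,b,c}"
             "convex hull {c,0} \<subseteq> convex hull {0,b,c}" by (rule hull_mono, blast)+
        note h = this
        have j1: "path_image (linepath 0 b +++ (linepath b c +++ linepath c 0)) \<subseteq> path_image (linepath 0 b) \<union> path_image (linepath b c +++ linepath c 0)"
          by (rule path_image_join_subset)
        have j2: "path_image (linepath b c +++ linepath c 0) \<subseteq> path_image (linepath b c) \<union> path_image (linepath c 0)"
          by (rule path_image_join_subset)
        show ?thesis using j1 j2 h unfolding path_image_linepath segment_convex_hull by blast
      qed
      also have "\<dots> \<subseteq> ball 0 1" using b c by (intro hull_minimal) auto
      finally show "path_image (linepath 0 b +++ linepath b c +++ linepath c 0) \<subseteq> ball 0 1" .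
    qed (simp_all add: valid_path_join)
    then show "contour_integral (linepath 0 b) (Qf \<beta> f) + contour_integral (linepath b c) (Qf \<beta> f) +
                       contour_integral (linepath c 0) (Qf \<beta> f) = 0"
      by (rule has_chain_integral_chain_integral3)
  qed (use z in simp_all)
  then have "((\<lambda>x. contour_integral (linepath 0 x) (Qf \<beta> f)) has_field_derivative Qf \<beta> f z) (at z)"
    by (metis at_within_open[OF z open_ball])
  then show ?thesis
    by (rule has_field_derivative_transform_within_open[of _ _ _ "ball 0 1"]) (use z in \<open>auto simp: cesaro_eq\<close>)
qed

lemma bloch_le:
  assumes "u \<in> bloch_space \<alpha>" "z \<in> ball 0 1"
  shows "(1 - (cmod z)^2) powr \<alpha> * cmod (deriv u z) \<le> bloch_norm \<alpha> u"
  using assms unfolding bloch_norm_def bloch_space_def by (intro cSUP_upper) auto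

lemma bloch_nonneg:
  assumes "u \<in> bloch_space \<alpha>" shows "0 \<le> bloch_norm \<alpha> u"
proof -
  have "0 \<le> (1 - (cmod (0::complex))^2) powr \<alpha> * cmod (deriv u 0)" by simp
  also have "\<dots> \<le> bloch_norm \<alpha> u" by (rule bloch_le[OF assms]) simp
  finally show ?thesis .
qed

lemma bloch_norm_le:
  assumes "\<And>z. z \<in> ball 0 1 \<Longrightarrow> (1 - (cmod z)^2) powr \<alpha> * cmod (deriv u z) \<le> B"
  shows "bloch_norm \<alpha> u \<le> B"
  unfolding bloch_norm_def by (rule cSUP_least) (use assms in auto)

lemma one_minus_sq_pos: "(z::complex) \<in> ball 0 1 \<Longrightarrow> 0 < 1 - (cmod z)^2"
  by (simp add: abs_square_less_1)

lemma deriv_bound: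
  assumes "f \<in> bloch_space \<alpha>" "w \<in> ball 0 1"
  shows "cmod (deriv f w) \<le> bloch_norm \<alpha> f * (1 - (cmod w)^2) powr (-\<alpha>)"
proof -
  have p: "0 < (1 - (cmod w)^2) powr \<alpha>" using one_minus_sq_pos[OF assms(2)] by simp
  have "(1 - (cmod w)^2) powr \<alpha> * cmod (deriv f w) \<le> bloch_norm \<alpha> f" by (rule bloch_le[OF assms])
  then have "cmod (deriv f w) \<le> bloch_norm \<alpha> f / (1 - (cmod w)^2) powr \<alpha>"
    using p by (simp add: field_simps)
  then show ?thesis by (simp add: powr_minus divide_inverse)
qed

lemma mvt_zero:
  assumes hol: "h holomorphic_on ball 0 1" and h0: "h 0 = 0" and \<rho>: "\<rho> < 1"
    and B: "\<And>w. cmod w \<le> \<rho> \<Longrightarrow> cmod (deriv h w) \<le> B" and z: "cmod z \<le> \<rho>"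
  shows "cmod (h z) \<le> B * cmod z"
proof -
  have sub: "cball 0 \<rho> \<subseteq> ball (0::complex) 1" using \<rho> by auto
  have r0: "0 \<le> \<rho>" using z norm_ge_zero[of z] by linarith
  have "cmod (h z - h 0) \<le> B * cmod (z - 0)"
  proof (rule field_differentiable_bound[of "cball 0 \<rho>"])
    fix w :: complex assume w: "w \<in> cball 0 \<rho>"
    then have "w \<in> ball 0 1" using sub by auto
    then show "(h has_field_derivative deriv h w) (at w within cball 0 \<rho>)"
      using holomorphic_derivI[OF hol open_ball] by (metis has_field_derivative_at_within)
    show "cmod (deriv h w) \<le> B" using w B by auto
  qed (use z r0 in auto)
  then show ?thesis using h0 by simp
qed

lemma growth:
  assumes f: "f \<in> bloch0 \<alpha>" and \<gamma>: "\<gamma> > 0" "\<alpha> \<le> \<gamma> + 1" and \<alpha>: "0 \<le> \<alpha>" and z: "z \<in> ball 0 1"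
  shows "cmod (f z) \<le> bloch_norm \<alpha> f / \<gamma> * (1 - cmod z) powr (-\<gamma>)"
proof -
  have fb: "f \<in> bloch_space \<alpha>" and f0: "f 0 = 0" and hol: "f holomorphic_on ball 0 1"
    using f by (auto simp: bloch0_def bloch_space_def)
  define N where "N = bloch_norm \<alpha> f"
  have N0: "0 \<le> N" using bloch_nonneg[OF fb] N_def by simp
  define r where "r = cmod z"
  have r: "0 \<le> r" "r < 1" using z by (auto simp: r_def)
  show ?thesis
  proof (cases "f z = 0")
    case True then show ?thesis using N0 \<gamma> by (simp add: N_def[symmetric])
  next
    case False
    define c where "c = cnj (f z) / cmod (f z)"
    have cfz: "c * f z = of_real (cmod (f z))"
    proof -
      have "f z * cnj (f z) = of_real (cmod (f z)) * of_real (cmod (f z))"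
        by (metis complex_norm_square of_real_mult power2_eq_square)
      then show ?thesis using False by (simp add: c_def field_simps)
    qed
    have cn: "cmod c = 1" using False by (simp add: c_def norm_divide)
    define \<phi> where "\<phi> t = Re (c * f (of_real t * z)) - N / \<gamma> * (1 - t * r) powr (-\<gamma>)" for t
    have "\<phi> 1 \<le> \<phi> 0"
    proof (rule DERIV_nonpos_imp_nonincreasing[of 0 1 \<phi>])
      fix t :: real assume t: "0 \<le> t" "t \<le> 1"
      have trr: "t * r \<le> r" using t r by (simp add: mult_left_le_one_le)
      have tr: "0 < 1 - t * r" using trr r by linarith
      have tr0: "0 \<le> t * r" using t r by simp
      have ntz: "cmod (of_real t * z) = t * r" using t by (simp add: norm_mult r_def)
      have tz: "of_real t * z \<in> ball 0 1" using ntz trr r by simp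
      have hcd: "((\<lambda>x. c * f (x * z)) has_field_derivative c * (deriv f (of_real t * z) * z)) (at (of_real t))"
      proof -
        have hd: "(f has_field_derivative deriv f (of_real t * z)) (at (of_real t * z))"
          by (rule holomorphic_derivI[OF hol open_ball tz])
        have hz: "((\<lambda>x. x * z) has_field_derivative z) (at (complex_of_real t))"
          by (rule derivative_eq_intros | simp)+
        show ?thesis
          by (rule DERIV_cmult, rule DERIV_chain2[where g="\<lambda>x. x * z" and x="of_real t", OF hd hz])
      qed
      have d1: "((\<lambda>t. c * f (of_real t * z)) has_vector_derivative (c * (deriv f (of_real t * z) * z))) (at t)"
        by (rule has_vector_derivative_real_field[OF hcd])
      have d2: "((\<lambda>t. 1 - t * r) has_real_derivative (- r)) (at t)"
        by (rule derivative_eq_intros | simp)+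
      have d3: "((\<lambda>t. (1 - t * r) powr (-\<gamma>)) has_real_derivative ((-\<gamma>) * (1 - t * r) powr (-\<gamma> - of_nat 1) * (- r))) (at t)"
        by (rule DERIV_fun_powr[OF d2]) (use tr in simp)
      have dphi: "(\<phi> has_real_derivative (Re (c * (deriv f (of_real t * z) * z)) - N / \<gamma> * ((-\<gamma>) * (1 - t * r) powr (-\<gamma> - of_nat 1) * (- r)))) (at t)"
        unfolding \<phi>_def[abs_def] by (intro DERIV_diff has_field_derivative_Re[OF d1] DERIV_cmult d3)
      have e1: "N / \<gamma> * ((-\<gamma>) * (1 - t * r) powr (-\<gamma> - of_nat 1) * (- r)) = N * r * (1 - t * r) powr (-\<gamma> - 1)"
        using \<gamma> by simp
      have "Re (c * (deriv f (of_real t * z) * z)) \<le> cmod (c * (deriv f (of_real t * z) * z))"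
        by (rule complex_Re_le_cmod)
      also have "\<dots> = cmod (deriv f (of_real t * z)) * r" by (simp add: norm_mult cn r_def)
      also have "\<dots> \<le> (N * (1 - (t * r)^2) powr (-\<alpha>)) * r"
        using deriv_bound[OF fb tz] ntz r by (intro mult_right_mono) (auto simp: N_def)
      also have "\<dots> \<le> (N * (1 - t * r) powr (-\<gamma> - 1)) * r"
      proof (intro mult_right_mono mult_left_mono r N0)
        have "(1 - (t * r)^2) powr (-\<alpha>) \<le> (1 - t * r) powr (-\<alpha>)"
        proof (rule powr_mono2')
          show "-\<alpha> \<le> 0" using \<alpha> by simp
          show "0 < 1 - t * r" by (rule tr)
          show "1 - t * r \<le> 1 - (t * r)^2" using tr0 trr r by (simp add: power2_eq_square mult_left_le_one_le)
        qed
        also have "\<dots> \<le> (1 - t * r) powr (-\<gamma> - 1)"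
          by (rule powr_mono') (use \<gamma> tr tr0 in auto)
        finally show "(1 - (t * r)^2) powr (-\<alpha>) \<le> (1 - t * r) powr (-\<gamma> - 1)" .
      qed
      finally have "Re (c * (deriv f (of_real t * z) * z)) - N / \<gamma> * ((-\<gamma>) * (1 - t * r) powr (-\<gamma> - of_nat 1) * (- r)) \<le> 0"
        unfolding e1 by (simp add: algebra_simps)
      then show "\<exists>y. (\<phi> has_real_derivative y) (at t) \<and> y \<le> 0" using dphi by blast
    qed simp
    then have "cmod (f z) - N / \<gamma> * (1 - r) powr (-\<gamma>) \<le> - N / \<gamma>"
      by (simp add: \<phi>_def cfz f0)
    moreover have "0 \<le> N / \<gamma>" using N0 \<gamma> by simp
    ultimately have "cmod (f z) \<le> N / \<gamma> * (1 - r) powr (-\<gamma>)" by linarith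
    then show ?thesis by (simp add: N_def r_def)
  qed
qed

lemma powr_neg_ge1: "0 < (x::real) \<Longrightarrow> x \<le> 1 \<Longrightarrow> 0 \<le> a \<Longrightarrow> 1 \<le> x powr (-a)"
  using powr_mono'[of "-a" 0 x] by simp

lemma growth2:
  assumes f: "f \<in> bloch0 \<alpha>" and \<gamma>: "\<gamma> > 0" "\<alpha> \<le> \<gamma> + 1" and \<alpha>: "0 \<le> \<alpha>" and z: "z \<in> ball 0 1"
  shows "cmod (f z) \<le> max (2 / \<gamma>) ((3/4) powr (-\<alpha>)) * bloch_norm \<alpha> f * cmod z * (1 - cmod z) powr (-\<gamma>)"
proof -
  have fb: "f \<in> bloch_space \<alpha>" and f0: "f 0 = 0" and hol: "f holomorphic_on ball 0 1"
    using f by (auto simp: bloch0_def bloch_space_def)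
  define N where "N = bloch_norm \<alpha> f"
  have N0: "0 \<le> N" using bloch_nonneg[OF fb] N_def by simp
  define A where "A = max (2 / \<gamma>) ((3/4) powr (-\<alpha>))"
  have zl: "cmod z < 1" using z by simp
  have s: "0 < 1 - cmod z" using zl by simp
  have P1: "1 \<le> (1 - cmod z) powr (-\<gamma>)" using s \<gamma> by (intro powr_neg_ge1) auto
  show ?thesis
  proof (cases "cmod z < 1/2")
    case True
    have "cmod (f z) \<le> (N * (1 - (cmod z)^2) powr (-\<alpha>)) * cmod z"
    proof (rule mvt_zero[OF hol f0 zl])
      fix w :: complex assume w: "cmod w \<le> cmod z"
      then have wb: "w \<in> ball 0 1" using zl by simp
      have "cmod (deriv f w) \<le> N * (1 - (cmod w)^2) powr (-\<alpha>)"
        using deriv_bound[OF fb wb] by (simp add: N_def)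
      also have "\<dots> \<le> N * (1 - (cmod z)^2) powr (-\<alpha>)"
      proof (intro mult_left_mono N0 powr_mono2')
        show "0 < 1 - (cmod z)^2" using one_minus_sq_pos[OF z] .
        show "1 - (cmod z)^2 \<le> 1 - (cmod w)^2" using w by (simp add: power_mono)
      qed (use \<alpha> in simp)
      finally show "cmod (deriv f w) \<le> N * (1 - (cmod z)^2) powr (-\<alpha>)" .
    qed simp
    also have "\<dots> \<le> (N * (3/4) powr (-\<alpha>)) * cmod z"
    proof (intro mult_right_mono mult_left_mono N0 powr_mono2')
      have "(cmod z)^2 \<le> (1/2)^2" using True by (intro power_mono) auto
      then show "3/4 \<le> 1 - (cmod z)^2" by (simp add: power2_eq_square)
    qed (use \<alpha> in simp_all)
    also have "\<dots> \<le> (N * (A * (1 - cmod z) powr (-\<gamma>))) * cmod z"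
    proof (intro mult_right_mono mult_left_mono N0)
      have "(3/4) powr (-\<alpha>) \<le> A" by (simp add: A_def)
      also have "\<dots> \<le> A * (1 - cmod z) powr (-\<gamma>)"
      proof -
        have A0: "0 \<le> A" using \<gamma> by (simp add: A_def le_max_iff_disj)
        show ?thesis using mult_left_mono[OF P1 A0] by simp
      qed
      finally show "(3/4) powr (-\<alpha>) \<le> A * (1 - cmod z) powr (-\<gamma>)" .
    qed simp
    finally show ?thesis by (simp add: A_def N_def mult_ac)
  next
    case False
    have "cmod (f z) \<le> N / \<gamma> * (1 - cmod z) powr (-\<gamma>)"
      using growth[OF f \<gamma> \<alpha> z] by (simp add: N_def)
    also have "\<dots> \<le> (2 / \<gamma>) * N * cmod z * (1 - cmod z) powr (-\<gamma>)"
    proof -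
      have "N / \<gamma> \<le> (2 / \<gamma>) * N * cmod z"
      proof -
        have "N * 1 \<le> N * (cmod z * 2)" using False N0 by (intro mult_left_mono) auto
        then show ?thesis using \<gamma> by (simp add: field_simps)
      qed
      then show ?thesis using P1 by (intro mult_right_mono) auto
    qed
    also have "\<dots> \<le> A * N * cmod z * (1 - cmod z) powr (-\<gamma>)"
      using P1 N0 by (intro mult_right_mono) (auto simp: A_def)
    finally show ?thesis by (simp add: A_def N_def)
  qed
qed

lemma norm_1mz_powr: "(z::complex) \<in> ball 0 1 \<Longrightarrow> cmod ((1 - z) powr (complex_of_real \<beta>)) = cmod (1 - z) powr \<beta>"
  by (simp add: norm_powr_real_powr')

lemma one_minus_norm_le: "(z::complex) \<in> ball 0 1 \<Longrightarrow> 1 - cmod z \<le> cmod (1 - z)"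
  using norm_triangle_ineq2[of 1 z] by simp

lemma pow_1mz_bound:
  assumes z: "(z::complex) \<in> ball 0 1"
  shows "cmod (1 - z) powr (-\<beta>) \<le> 2 powr \<bar>\<beta>\<bar> * (1 - cmod z) powr (- max \<beta> 0)"
proof -
  have s: "0 < 1 - cmod z" using z by simp
  have l: "1 - cmod z \<le> cmod (1 - z)" by (rule one_minus_norm_le[OF z])
  have u: "cmod (1 - z) \<le> 2" using norm_triangle_ineq4[of 1 z] z by simp
  show ?thesis
  proof (cases "\<beta> \<ge> 0")
    case True
    have "cmod (1 - z) powr (-\<beta>) \<le> (1 - cmod z) powr (-\<beta>)"
      by (rule powr_mono2') (use True s l in auto)
    also have "\<dots> \<le> 2 powr \<bar>\<beta>\<bar> * (1 - cmod z) powr (-\<beta>)"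
    proof -
      have "1 \<le> (2::real) powr \<bar>\<beta>\<bar>" by (rule ge_one_powr_ge_zero) auto
      then show ?thesis using mult_right_mono[of 1 "2 powr \<bar>\<beta>\<bar>" "(1 - cmod z) powr (-\<beta>)"] by simp
    qed
    finally show ?thesis using True by simp
  next
    case False
    have "cmod (1 - z) powr (-\<beta>) \<le> 2 powr (-\<beta>)"
      by (rule powr_mono2) (use False u in auto)
    then show ?thesis using False s by simp
  qed
qed

lemma weight_le: "(z::complex) \<in> ball 0 1 \<Longrightarrow> 0 \<le> \<alpha> \<Longrightarrow> (1 - (cmod z)^2) powr \<alpha> \<le> 2 powr \<alpha> * (1 - cmod z) powr \<alpha>"
proof -
  assume z: "z \<in> ball 0 1" and a: "0 \<le> \<alpha>"
  have s: "0 < 1 - cmod z" using z by simp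
  have "(1 - (cmod z)^2) powr \<alpha> \<le> (2 * (1 - cmod z)) powr \<alpha>"
  proof (rule powr_mono2[OF a])
    show "0 \<le> 1 - (cmod z)^2" using one_minus_sq_pos[OF z] by simp
    have "1 - (cmod z)^2 = (1 - cmod z) * (1 + cmod z)" by (simp add: algebra_simps power2_eq_square)
    also have "\<dots> \<le> (1 - cmod z) * 2" using s z by (intro mult_left_mono) auto
    finally show "1 - (cmod z)^2 \<le> 2 * (1 - cmod z)" by simp
  qed
  also have "\<dots> = 2 powr \<alpha> * (1 - cmod z) powr \<alpha>" using powr_mult[of 2 "1 - cmod z" \<alpha>] s by simp
  finally show ?thesis .
qed

lemma weighted_bound:
  assumes z: "z \<in> ball 0 1" "z \<noteq> 0" and hb: "cmod (f z) \<le> K * cmod z * (1 - cmod z) powr (-\<gamma>)"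
    and K: "0 \<le> K" and \<alpha>: "0 \<le> \<alpha>"
  shows "(1 - (cmod z)^2) powr \<alpha> * cmod (f z / z / (1 - z) powr (complex_of_real \<beta>))
         \<le> K * 2 powr \<alpha> * 2 powr \<bar>\<beta>\<bar> * (1 - cmod z) powr (\<alpha> - \<gamma> - max \<beta> 0)"
proof -
  define s where "s = 1 - cmod z"
  have s: "0 < s" using z by (simp add: s_def)
  have nz: "0 < cmod (1 - z)" using one_minus_norm_le[OF z(1)] s unfolding s_def by linarith
  have "cmod (f z / z / (1 - z) powr (complex_of_real \<beta>)) = cmod (f z) / cmod z * cmod (1 - z) powr (-\<beta>)"
  proof -
    have "cmod (f z / z / (1 - z) powr (complex_of_real \<beta>)) = cmod (f z) / cmod z / cmod ((1 - z) powr (complex_of_real \<beta>))"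
      by (simp only: norm_divide)
    also have "\<dots> = cmod (f z) / cmod z / cmod (1 - z) powr \<beta>" by (simp only: norm_1mz_powr[OF z(1)])
    finally show ?thesis by (simp add: powr_minus divide_inverse)
  qed
  also have "\<dots> \<le> (K * s powr (-\<gamma>)) * (2 powr \<bar>\<beta>\<bar> * s powr (- max \<beta> 0))"
  proof (rule mult_mono)
    show "cmod (f z) / cmod z \<le> K * s powr (-\<gamma>)" using hb z by (simp add: field_simps s_def)
    show "cmod (1 - z) powr (-\<beta>) \<le> 2 powr \<bar>\<beta>\<bar> * s powr (- max \<beta> 0)"
      using pow_1mz_bound[OF z(1)] by (simp add: s_def)
  qed (use K in auto)
  finally have h1: "cmod (f z / z / (1 - z) powr (complex_of_real \<beta>)) \<le> (K * s powr (-\<gamma>)) * (2 powr \<bar>\<beta>\<bar> * s powr (- max \<beta> 0))" .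
  have "(1 - (cmod z)^2) powr \<alpha> * cmod (f z / z / (1 - z) powr (complex_of_real \<beta>))
        \<le> (2 powr \<alpha> * s powr \<alpha>) * ((K * s powr (-\<gamma>)) * (2 powr \<bar>\<beta>\<bar> * s powr (- max \<beta> 0)))"
    using weight_le[OF z(1) \<alpha>] h1 K by (intro mult_mono) (auto simp: s_def)
  also have "\<dots> = K * 2 powr \<alpha> * 2 powr \<bar>\<beta>\<bar> * (s powr \<alpha> * s powr (-\<gamma>) * s powr (- max \<beta> 0))"
    by (simp add: mult_ac)
  also have "s powr \<alpha> * s powr (-\<gamma>) * s powr (- max \<beta> 0) = s powr (\<alpha> - \<gamma> - max \<beta> 0)"
    using s by (simp add: powr_add[symmetric])
  finally show ?thesis by (simp add: s_def)
qed

definition gam :: "real \<Rightarrow> real \<Rightarrow> real" where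
  "gam \<alpha> \<beta> = (max (\<alpha> - 1) 0 + (\<alpha> - max \<beta> 0)) / 2"
definition del :: "real \<Rightarrow> real \<Rightarrow> real" where
  "del \<alpha> \<beta> = \<alpha> - gam \<alpha> \<beta> - max \<beta> 0"
definition AA :: "real \<Rightarrow> real \<Rightarrow> real" where
  "AA \<alpha> \<beta> = max (2 / gam \<alpha> \<beta>) ((3/4) powr (-\<alpha>))"
definition Cst :: "real \<Rightarrow> real \<Rightarrow> real" where
  "Cst \<alpha> \<beta> = max 1 (AA \<alpha> \<beta> * 2 powr \<alpha> * 2 powr \<bar>\<beta>\<bar>)"

definition good :: "real \<Rightarrow> real \<Rightarrow> bool" where
  "good \<alpha> \<beta> \<longleftrightarrow> 0 < \<alpha> \<and> max (\<alpha> - 1) 0 < \<alpha> - max \<beta> 0"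

lemma good_props:
  assumes "good \<alpha> \<beta>"
  shows "0 < gam \<alpha> \<beta>" "\<alpha> \<le> gam \<alpha> \<beta> + 1" "0 < del \<alpha> \<beta>" "0 \<le> AA \<alpha> \<beta>" "1 \<le> Cst \<alpha> \<beta>" "0 < \<alpha>"
proof -
  define m where "m = max (\<alpha> - 1) 0"
  define u where "u = \<alpha> - max \<beta> 0"
  have m: "0 \<le> m" "\<alpha> - 1 \<le> m" by (auto simp: m_def)
  have mu: "m < u" "0 < \<alpha>" using assms by (auto simp: good_def m_def u_def)
  have ge: "gam \<alpha> \<beta> = (m + u) / 2" by (simp add: gam_def m_def u_def)
  show g1: "0 < gam \<alpha> \<beta>" unfolding ge using m mu by (simp add: field_simps)
  show "\<alpha> \<le> gam \<alpha> \<beta> + 1" unfolding ge using m mu by (simp add: field_simps)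
  have "max \<beta> 0 = \<alpha> - u" by (simp add: u_def)
  then show "0 < del \<alpha> \<beta>" unfolding del_def ge using m mu by (simp add: field_simps)
  show "0 \<le> AA \<alpha> \<beta>" using g1 by (simp add: AA_def le_max_iff_disj)
  show "1 \<le> Cst \<alpha> \<beta>" by (simp add: Cst_def)
  show "0 < \<alpha>" by (rule mu(2))
qed

lemma KL_gen:
  assumes g: "good \<alpha> \<beta>" and M: "0 \<le> M"
    and hb: "\<And>z. z \<in> ball 0 1 \<Longrightarrow> cmod (f z) \<le> AA \<alpha> \<beta> * M * cmod z * (1 - cmod z) powr (- gam \<alpha> \<beta>)"
    and z: "z \<in> ball 0 1" "z \<noteq> 0"
  shows "(1 - (cmod z)^2) powr \<alpha> * cmod (Qf \<beta> f z) \<le> Cst \<alpha> \<beta> * M * (1 - cmod z) powr (del \<alpha> \<beta>)"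
proof -
  note gp = good_props[OF g]
  have "(1 - (cmod z)^2) powr \<alpha> * cmod (Qf \<beta> f z) = (1 - (cmod z)^2) powr \<alpha> * cmod (f z / z / (1 - z) powr (complex_of_real \<beta>))"
    using z by (simp add: Qf_def)
  also have "\<dots> \<le> (AA \<alpha> \<beta> * M) * 2 powr \<alpha> * 2 powr \<bar>\<beta>\<bar> * (1 - cmod z) powr (\<alpha> - gam \<alpha> \<beta> - max \<beta> 0)"
    by (rule weighted_bound[OF z]) (use hb[OF z(1)] gp M in auto)
  also have "\<dots> = (AA \<alpha> \<beta> * 2 powr \<alpha> * 2 powr \<bar>\<beta>\<bar>) * M * (1 - cmod z) powr (del \<alpha> \<beta>)"
    by (simp add: del_def)
  also have "\<dots> \<le> Cst \<alpha> \<beta> * M * (1 - cmod z) powr (del \<alpha> \<beta>)"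
    by (intro mult_right_mono) (auto simp: Cst_def M)
  finally show ?thesis .
qed

lemma Qf_0: "Qf \<beta> f 0 = deriv f 0"
  by (simp add: Qf_def)

lemma KL:
  assumes g: "good \<alpha> \<beta>" and f: "f \<in> bloch0 \<alpha>" and z: "z \<in> ball 0 1"
  shows "(1 - (cmod z)^2) powr \<alpha> * cmod (Qf \<beta> f z) \<le> Cst \<alpha> \<beta> * bloch_norm \<alpha> f * (1 - cmod z) powr (del \<alpha> \<beta>)"
proof -
  note gp = good_props[OF g]
  have fb: "f \<in> bloch_space \<alpha>" using f by (simp add: bloch0_def)
  have N0: "0 \<le> bloch_norm \<alpha> f" by (rule bloch_nonneg[OF fb])
  show ?thesis
  proof (cases "z = 0")
    case True
    have "cmod (deriv f 0) \<le> bloch_norm \<alpha> f" using bloch_le[OF fb, of 0] by simp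
    also have "\<dots> \<le> Cst \<alpha> \<beta> * bloch_norm \<alpha> f" using gp N0 mult_right_mono[of 1 "Cst \<alpha> \<beta>" "bloch_norm \<alpha> f"] by simp
    finally show ?thesis using True by (simp add: Qf_0)
  next
    case False
    show ?thesis
    proof (rule KL_gen[OF g N0 _ z False])
      fix w :: complex assume w: "w \<in> ball 0 1"
      show "cmod (f w) \<le> AA \<alpha> \<beta> * bloch_norm \<alpha> f * cmod w * (1 - cmod w) powr (- gam \<alpha> \<beta>)"
        using growth2[OF f gp(1) gp(2) _ w] gp by (simp add: AA_def)
    qed
  qed
qed

lemma s_powr_le1: "(z::complex) \<in> ball 0 1 \<Longrightarrow> 0 \<le> d \<Longrightarrow> (1 - cmod z) powr d \<le> 1"
  by (rule powr_le1) auto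

lemma deriv_cesaro:
  assumes "f holomorphic_on ball 0 1" "f 0 = 0" "z \<in> ball 0 1"
  shows "deriv (cesaro \<beta> f) z = Qf \<beta> f z"
  by (rule DERIV_imp_deriv[OF cesaro_deriv[OF assms]])

lemma cesaro_in_bloch0:
  assumes hol: "f holomorphic_on ball 0 1" and f0: "f 0 = 0"
    and B: "\<And>z. z \<in> ball 0 1 \<Longrightarrow> (1 - (cmod z)^2) powr \<alpha> * cmod (Qf \<beta> f z) \<le> B"
  shows "cesaro \<beta> f \<in> bloch0 \<alpha>" "bloch_norm \<alpha> (cesaro \<beta> f) \<le> B"
proof -
  have hc: "cesaro \<beta> f holomorphic_on ball 0 1"
    unfolding holomorphic_on_open[OF open_ball] using cesaro_deriv[OF hol f0] by blast
  have bd: "bdd_above ((\<lambda>z. (1 - (cmod z)^2) powr \<alpha> * cmod (deriv (cesaro \<beta> f) z)) ` ball 0 1)"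
    using B deriv_cesaro[OF hol f0] by (auto intro!: bdd_aboveI2[where M=B])
  show "cesaro \<beta> f \<in> bloch0 \<alpha>"
    using hc bd by (simp add: bloch0_def bloch_space_def cesaro_def)
  show "bloch_norm \<alpha> (cesaro \<beta> f) \<le> B"
    by (rule bloch_norm_le) (use B deriv_cesaro[OF hol f0] in auto)
qed

lemma seg_ball: "(z::complex) \<in> ball 0 1 \<Longrightarrow> closed_segment 0 z \<subseteq> ball 0 1"
  by (rule convex_contains_segment[THEN iffD1, rule_format]) auto

lemma bloch_lincomb:
  assumes u: "u \<in> bloch_space \<alpha>" and v: "v \<in> bloch_space \<alpha>"
  shows "(\<lambda>z. a * u z + b * v z) \<in> bloch_space \<alpha>"
        "bloch_norm \<alpha> (\<lambda>z. a * u z + b * v z) \<le> cmod a * bloch_norm \<alpha> u + cmod b * bloch_norm \<alpha> v"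
proof -
  have hu: "u holomorphic_on ball 0 1" and hv: "v holomorphic_on ball 0 1"
    using u v by (auto simp: bloch_space_def)
  have hol: "(\<lambda>z. a * u z + b * v z) holomorphic_on ball 0 1"
    by (intro holomorphic_intros hu hv)
  have dv: "deriv (\<lambda>z. a * u z + b * v z) z = a * deriv u z + b * deriv v z" if z: "z \<in> ball 0 1" for z
    by (rule DERIV_imp_deriv)
       (rule DERIV_add[OF DERIV_cmult[OF holomorphic_derivI[OF hu open_ball z]] DERIV_cmult[OF holomorphic_derivI[OF hv open_ball z]]])
  have bd: "(1 - (cmod z)^2) powr \<alpha> * cmod (deriv (\<lambda>z. a * u z + b * v z) z)
            \<le> cmod a * bloch_norm \<alpha> u + cmod b * bloch_norm \<alpha> v" if z: "z \<in> ball 0 1" for z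
  proof -
    define w where "w = (1 - (cmod z)^2) powr \<alpha>"
    have w0: "0 \<le> w" by (simp add: w_def)
    have "w * cmod (deriv (\<lambda>z. a * u z + b * v z) z) \<le> w * (cmod a * cmod (deriv u z) + cmod b * cmod (deriv v z))"
      unfolding dv[OF z] using w0
      by (intro mult_left_mono) (auto intro: order_trans[OF norm_triangle_ineq] simp: norm_mult)
    also have "\<dots> = cmod a * (w * cmod (deriv u z)) + cmod b * (w * cmod (deriv v z))"
      by (simp add: algebra_simps)
    also have "\<dots> \<le> cmod a * bloch_norm \<alpha> u + cmod b * bloch_norm \<alpha> v"
      using bloch_le[OF u z] bloch_le[OF v z] unfolding w_def
      by (intro add_mono mult_left_mono) auto
    finally show ?thesis by (simp add: w_def)
  qed
  show "(\<lambda>z. a * u z + b * v z) \<in> bloch_space \<alpha>"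
    unfolding bloch_space_def using hol bd by (auto intro!: bdd_aboveI2)
  show "bloch_norm \<alpha> (\<lambda>z. a * u z + b * v z) \<le> cmod a * bloch_norm \<alpha> u + cmod b * bloch_norm \<alpha> v"
    by (rule bloch_norm_le) (rule bd)
qed

lemma bloch0_lincomb:
  assumes "u \<in> bloch0 \<alpha>" "v \<in> bloch0 \<alpha>"
  shows "(\<lambda>z. a * u z + b * v z) \<in> bloch0 \<alpha>"
  using bloch_lincomb(1)[of u \<alpha> v a b] assms by (auto simp: bloch0_def)

lemma cesaro_welldef:
  assumes "\<forall>z\<in>ball 0 1. f z = g z" "z \<in> ball 0 1"
  shows "cesaro \<beta> f z = cesaro \<beta> g z"
  unfolding cesaro_def
  by (rule contour_integral_eq) (use assms seg_ball[OF assms(2)] in auto)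

lemma Qf_integrable:
  assumes "f holomorphic_on ball 0 1" "f 0 = 0" "z \<in> ball 0 1"
  shows "Qf \<beta> f contour_integrable_on linepath 0 z"
  by (rule contour_integrable_continuous_linepath,
      rule continuous_on_subset[OF holomorphic_on_imp_continuous_on[OF holQ[OF assms(1,2)]] seg_ball[OF assms(3)]])

lemma cesaro_linear:
  assumes hf: "f holomorphic_on ball 0 1" "f 0 = 0" and hg: "g holomorphic_on ball 0 1" "g 0 = 0"
    and z: "z \<in> ball 0 1"
  shows "cesaro \<beta> (\<lambda>w. a * f w + b * g w) z = a * cesaro \<beta> f z + b * cesaro \<beta> g z"
proof (cases "z = 0")
  case True then show ?thesis by (simp add: cesaro_def)
next
  case False
  have "cesaro \<beta> (\<lambda>w. a * f w + b * g w) z = contour_integral (linepath 0 z) (Qf \<beta> (\<lambda>w. a * f w + b * g w))"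
    by (rule cesaro_eq[OF z])
  also have "\<dots> = contour_integral (linepath 0 z) (\<lambda>w. a * Qf \<beta> f w + b * Qf \<beta> g w)"
    by (rule contour_integral_spike_finite_simple_path[of "{0}"])
       (use False in \<open>auto simp: Qf_def add_divide_distrib\<close>)
  also have "\<dots> = a * contour_integral (linepath 0 z) (Qf \<beta> f) + b * contour_integral (linepath 0 z) (Qf \<beta> g)"
    using Qf_integrable[OF hf z] Qf_integrable[OF hg z]
    by (simp add: contour_integral_add contour_integrable_lmul contour_integral_lmul)
  also have "\<dots> = a * cesaro \<beta> f z + b * cesaro \<beta> g z"
    by (simp add: cesaro_eq[OF z])
  finally show ?thesis .
qed

lemma cesaro_bloch0:
  assumes g: "good \<alpha> \<beta>" and f: "f \<in> bloch0 \<alpha>"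
  shows "cesaro \<beta> f \<in> bloch0 \<alpha>" "bloch_norm \<alpha> (cesaro \<beta> f) \<le> Cst \<alpha> \<beta> * bloch_norm \<alpha> f"
proof -
  have hol: "f holomorphic_on ball 0 1" and f0: "f 0 = 0" using f by (auto simp: bloch0_def bloch_space_def)
  have fb: "f \<in> bloch_space \<alpha>" using f by (simp add: bloch0_def)
  note gp = good_props[OF g]
  have B: "(1 - (cmod z)^2) powr \<alpha> * cmod (Qf \<beta> f z) \<le> Cst \<alpha> \<beta> * bloch_norm \<alpha> f" if z: "z \<in> ball 0 1" for z
  proof -
    have "(1 - (cmod z)^2) powr \<alpha> * cmod (Qf \<beta> f z) \<le> Cst \<alpha> \<beta> * bloch_norm \<alpha> f * (1 - cmod z) powr (del \<alpha> \<beta>)"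
      by (rule KL[OF g f z])
    also have "\<dots> \<le> Cst \<alpha> \<beta> * bloch_norm \<alpha> f * 1"
      using s_powr_le1[OF z, of "del \<alpha> \<beta>"] gp bloch_nonneg[OF fb]
      by (intro mult_left_mono) auto
    finally show ?thesis by simp
  qed
  show "cesaro \<beta> f \<in> bloch0 \<alpha>" by (rule cesaro_in_bloch0(1)[OF hol f0 B])
  show "bloch_norm \<alpha> (cesaro \<beta> f) \<le> Cst \<alpha> \<beta> * bloch_norm \<alpha> f" by (rule cesaro_in_bloch0(2)[OF hol f0 B])
qed

lemma cesaro_op:
  assumes g: "good \<alpha> \<beta>"
  shows "op_on_bloch0 \<alpha> (cesaro \<beta>)"
  unfolding op_on_bloch0_def
proof (intro conjI ballI allI impI)
  fix f assume "f \<in> bloch0 \<alpha>" then show "cesaro \<beta> f \<in> bloch0 \<alpha>" by (rule cesaro_bloch0[OF g])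
next
  fix f g :: "complex \<Rightarrow> complex" and z :: complex
  assume "f \<in> bloch0 \<alpha>" "g \<in> bloch0 \<alpha>" "\<forall>z\<in>ball 0 1. f z = g z" "z \<in> ball 0 1"
  then show "cesaro \<beta> f z = cesaro \<beta> g z" by (intro cesaro_welldef) auto
next
  fix f g :: "complex \<Rightarrow> complex" and a b z :: complex
  assume "f \<in> bloch0 \<alpha>" "g \<in> bloch0 \<alpha>" "z \<in> ball 0 1"
  then show "cesaro \<beta> (\<lambda>w. a * f w + b * g w) z = a * cesaro \<beta> f z + b * cesaro \<beta> g z"
    by (intro cesaro_linear) (auto simp: bloch0_def bloch_space_def)
qed

lemma cesaro_bounded:
  assumes g: "good \<alpha> \<beta>"
  shows "bounded_op \<alpha> (cesaro \<beta>)"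
  unfolding bounded_op_def using cesaro_op[OF g] cesaro_bloch0(2)[OF g] by blast

lemma compact_in_ball:
  assumes "compact K" "K \<subseteq> ball (0::complex) 1"
  shows "\<exists>\<rho>. 0 \<le> \<rho> \<and> \<rho> < 1 \<and> K \<subseteq> cball 0 \<rho>"
proof (cases "K = {}")
  case True then show ?thesis by (intro exI[of _ 0]) auto
next
  case False
  obtain x where x: "x \<in> K" "\<And>y. y \<in> K \<Longrightarrow> cmod y \<le> cmod x"
    using compact_attains_sup[OF compact_continuous_image[OF continuous_on_norm_id assms(1)]] False
    by auto
  show ?thesis using x assms(2) by (intro exI[of _ "cmod x"]) auto
qed

lemma eps_choice:
  fixes K e d :: real
  assumes K: "0 \<le> K" and e: "0 < e" and d: "0 < d"
  shows "\<exists>\<eta>. 0 < \<eta> \<and> \<eta> \<le> 1/2 \<and> K * \<eta> powr d \<le> e"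
proof -
  define q where "q = e / (K + 1)"
  have q: "0 < q" using K e unfolding q_def by (intro divide_pos_pos) auto
  define \<eta> where "\<eta> = min (1/2) (q powr (1/d))"
  have \<eta>: "0 < \<eta>" "\<eta> \<le> 1/2" using q by (auto simp: \<eta>_def)
  have "\<eta> powr d \<le> (q powr (1/d)) powr d"
    by (rule powr_mono2) (use d \<eta> in \<open>auto simp: \<eta>_def\<close>)
  also have "\<dots> = q" using q d by (simp add: powr_powr)
  finally have "K * \<eta> powr d \<le> K * q" using K by (intro mult_left_mono) auto
  also have "K * q \<le> e" using K e by (simp add: q_def field_simps)
  finally show ?thesis using \<eta> by blast
qed

lemma Qf_diff:
  assumes "f holomorphic_on ball 0 1" "g holomorphic_on ball 0 1"
  shows "Qf \<beta> f z - Qf \<beta> g z = Qf \<beta> (\<lambda>w. f w - g w) z"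
proof (cases "z = 0")
  case True
  have "deriv (\<lambda>w. f w - g w) 0 = deriv f 0 - deriv g 0"
    by (rule DERIV_imp_deriv, rule DERIV_diff)
       (auto intro!: holomorphic_derivI[OF assms(1) open_ball] holomorphic_derivI[OF assms(2) open_ball])
  then show ?thesis using True by (simp add: Qf_def diff_divide_distrib)
next
  case False then show ?thesis by (simp add: Qf_def diff_divide_distrib)
qed

lemma weight_le1: "(z::complex) \<in> ball 0 1 \<Longrightarrow> 0 \<le> \<alpha> \<Longrightarrow> (1 - (cmod z)^2) powr \<alpha> \<le> 1"
  by (rule powr_le1) (auto simp: abs_le_iff abs_square_le_1)

lemma cesaro_compact_seq:
  fixes s :: "nat \<Rightarrow> complex \<Rightarrow> complex"
  assumes g: "good \<alpha> \<beta>" and s: "\<And>n. s n \<in> bloch0 \<alpha>" and M: "\<And>n. bloch_norm \<alpha> (s n) \<le> M"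
  shows "\<exists>r f. strict_mono r \<and> cesaro \<beta> f \<in> bloch0 \<alpha> \<and>
     (\<lambda>n. bloch_norm \<alpha> (\<lambda>z. cesaro \<beta> (s (r n)) z - cesaro \<beta> f z)) \<longlonglongrightarrow> 0"
proof -
  note gp = good_props[OF g]
  define G where "G z = AA \<alpha> \<beta> * M * cmod z * (1 - cmod z) powr (- gam \<alpha> \<beta>)" for z :: complex
  have sb: "s n \<in> bloch_space \<alpha>" "s n holomorphic_on ball 0 1" "s n 0 = 0" for n
    using s[of n] by (auto simp: bloch0_def bloch_space_def)
  have "0 \<le> bloch_norm \<alpha> (s 0)" by (rule bloch_nonneg[OF sb(1)])
  then have M0: "0 \<le> M" using M[of 0] by linarith
  have sG: "cmod (s n z) \<le> G z" if z: "z \<in> ball 0 1" for n z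
  proof -
    have "cmod (s n z) \<le> AA \<alpha> \<beta> * bloch_norm \<alpha> (s n) * cmod z * (1 - cmod z) powr (- gam \<alpha> \<beta>)"
      using growth2[OF s gp(1) gp(2) _ z] gp by (simp add: AA_def)
    also have "\<dots> \<le> G z" unfolding G_def
      using M[of n] gp by (intro mult_right_mono mult_left_mono) auto
    finally show ?thesis .
  qed
  have hH: "\<And>h. h \<in> range s \<Longrightarrow> h holomorphic_on ball 0 1" using sb by auto
  have bK: "\<exists>B. \<forall>h\<in>range s. \<forall>z\<in>K. cmod (h z) \<le> B" if K: "compact K" "K \<subseteq> ball 0 1" for K
  proof -
    obtain \<rho> where \<rho>: "0 \<le> \<rho>" "\<rho> < 1" "K \<subseteq> cball 0 \<rho>" using compact_in_ball[OF K] by blast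
    have "cmod (s n z) \<le> AA \<alpha> \<beta> * M * 1 * (1 - \<rho>) powr (- gam \<alpha> \<beta>)" if z: "z \<in> K" for n z
    proof -
      have zr: "cmod z \<le> \<rho>" using \<rho> z by auto
      have zb: "z \<in> ball 0 1" using K z by auto
      have "cmod (s n z) \<le> G z" by (rule sG[OF zb])
      also have "\<dots> \<le> AA \<alpha> \<beta> * M * 1 * (1 - \<rho>) powr (- gam \<alpha> \<beta>)" unfolding G_def
      proof (intro mult_mono mult_left_mono)
        show "(1 - cmod z) powr (- gam \<alpha> \<beta>) \<le> (1 - \<rho>) powr (- gam \<alpha> \<beta>)"
          by (rule powr_mono2') (use gp zr \<rho> in auto)
      qed (use gp M0 zb in auto)
      finally show ?thesis .
    qed
    then show ?thesis by blast
  qed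
  obtain f r where f1: "f holomorphic_on ball 0 1" and f2: "strict_mono r"
    and f3: "\<And>x. x \<in> ball 0 1 \<Longrightarrow> ((\<lambda>n. s (r n) x) \<longlongrightarrow> f x) sequentially"
    and f4: "\<And>K. \<lbrakk>compact K; K \<subseteq> ball 0 1\<rbrakk> \<Longrightarrow> uniform_limit K (s \<circ> r) f sequentially"
    using Montel[OF open_ball hH bK subset_refl[of "range s"]] by blast
  have f0: "f 0 = 0"
  proof -
    have "((\<lambda>n. s (r n) 0) \<longlongrightarrow> f 0) sequentially" using f3[of 0] by simp
    then have "((\<lambda>n. 0) \<longlongrightarrow> f 0) sequentially" using sb(3) by simp
    then show ?thesis using LIMSEQ_unique[OF _ tendsto_const] by metis
  qed
  have fG: "cmod (f z) \<le> G z" if z: "z \<in> ball 0 1" for z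
    by (rule tendsto_le[OF trivial_limit_sequentially tendsto_const tendsto_norm[OF f3[OF z]]])
       (use sG[OF z] in auto)
  define Bf where "Bf = max (Cst \<alpha> \<beta> * M) (cmod (deriv f 0))"
  have KLf: "(1 - (cmod z)^2) powr \<alpha> * cmod (Qf \<beta> f z) \<le> Cst \<alpha> \<beta> * M * (1 - cmod z) powr (del \<alpha> \<beta>)"
    if z: "z \<in> ball 0 1" "z \<noteq> 0" for z
    by (rule KL_gen[OF g M0 _ z]) (use fG in \<open>auto simp: G_def\<close>)
  have hB: "(1 - (cmod z)^2) powr \<alpha> * cmod (Qf \<beta> f z) \<le> Bf" if z: "z \<in> ball 0 1" for z
  proof (cases "z = 0")
    case True then show ?thesis by (simp add: Qf_0 Bf_def)
  next
    case False
    have "(1 - (cmod z)^2) powr \<alpha> * cmod (Qf \<beta> f z) \<le> Cst \<alpha> \<beta> * M * (1 - cmod z) powr (del \<alpha> \<beta>)"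
      by (rule KLf[OF z False])
    also have "\<dots> \<le> Cst \<alpha> \<beta> * M * 1"
      using s_powr_le1[OF z, of "del \<alpha> \<beta>"] gp M0 by (intro mult_left_mono) auto
    finally show ?thesis by (simp add: Bf_def)
  qed
  have fb: "cesaro \<beta> f \<in> bloch0 \<alpha>" by (rule cesaro_in_bloch0(1)[OF f1 f0 hB])
  have conv: "(\<lambda>n. bloch_norm \<alpha> (\<lambda>z. cesaro \<beta> (s (r n)) z - cesaro \<beta> f z)) \<longlonglongrightarrow> 0"
  proof (rule LIMSEQ_I)
    fix \<epsilon> :: real assume \<epsilon>: "0 < \<epsilon>"
    obtain \<eta> where \<eta>: "0 < \<eta>" "\<eta> \<le> 1/2" "(2 * Cst \<alpha> \<beta> * M) * \<eta> powr (del \<alpha> \<beta>) \<le> \<epsilon> / 4"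
      using eps_choice[of "2 * Cst \<alpha> \<beta> * M" "\<epsilon> / 4" "del \<alpha> \<beta>"] gp M0 \<epsilon> by auto
    define \<rho> where "\<rho> = 1 - \<eta>"
    define \<rho>' where "\<rho>' = 1 - \<eta> / 2"
    define d where "d = \<eta> / 2"
    define L where "L = 2 powr \<bar>\<beta>\<bar> * \<eta> powr (- max \<beta> 0)"
    have L0: "0 < L" using \<eta> by (simp add: L_def)
    have d0: "0 < d" using \<eta> by (simp add: d_def)
    define \<theta> where "\<theta> = \<epsilon> / 4 * d / L"
    have \<theta>0: "0 < \<theta>" using \<epsilon> d0 L0 by (simp add: \<theta>_def)
    have \<rho>1: "\<rho> < 1" "1/2 \<le> \<rho>" "\<rho>' < 1" "\<rho> + d = \<rho>'" using \<eta> by (auto simp: \<rho>_def \<rho>'_def d_def)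
    have cb: "cball 0 \<rho>' \<subseteq> ball (0::complex) 1" using \<rho>1 by auto
    have "uniform_limit (cball 0 \<rho>') (s \<circ> r) f sequentially" by (rule f4[OF compact_cball cb])
    then have "\<forall>\<^sub>F n in sequentially. \<forall>x\<in>cball 0 \<rho>'. dist ((s \<circ> r) n x) (f x) < \<theta>"
      using uniform_limitD \<theta>0 by blast
    then obtain no where no0: "\<forall>n\<ge>no. \<forall>x\<in>cball 0 \<rho>'. dist ((s \<circ> r) n x) (f x) < \<theta>"
      unfolding eventually_sequentially by blast
    have no: "cmod (s (r n) x - f x) < \<theta>" if "no \<le> n" "x \<in> cball 0 \<rho>'" for n x
      using no0 that by (auto simp: dist_norm)
    show "\<exists>no. \<forall>n\<ge>no. norm (bloch_norm \<alpha> (\<lambda>z. cesaro \<beta> (s (r n)) z - cesaro \<beta> f z) - 0) < \<epsilon>"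
    proof (intro exI allI impI)
      fix n assume n: "no \<le> n"
      define h where "h = (\<lambda>w. s (r n) w - f w)"
      have hh: "h holomorphic_on ball 0 1" unfolding h_def by (intro holomorphic_intros sb(2) f1)
      have h0: "h 0 = 0" by (simp add: h_def sb(3) f0)
      define D where "D = (\<lambda>z. cesaro \<beta> (s (r n)) z - cesaro \<beta> f z)"
      have Dd: "deriv D z = Qf \<beta> h z" if z: "z \<in> ball 0 1" for z
      proof -
        have "deriv D z = Qf \<beta> (s (r n)) z - Qf \<beta> f z" unfolding D_def
          by (rule DERIV_imp_deriv, rule DERIV_diff) (rule cesaro_deriv[OF sb(2) sb(3) z], rule cesaro_deriv[OF f1 f0 z])
        also have "\<dots> = Qf \<beta> h z" unfolding h_def by (rule Qf_diff[OF sb(2) f1])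
        finally show ?thesis .
      qed
      have Dsp: "D \<in> bloch_space \<alpha>"
      proof -
        have "(\<lambda>z. 1 * cesaro \<beta> (s (r n)) z + (-1) * cesaro \<beta> f z) \<in> bloch_space \<alpha>"
          by (rule bloch_lincomb(1)) (use cesaro_bloch0(1)[OF g s] fb in \<open>auto simp: bloch0_def\<close>)
        then show ?thesis by (simp add: D_def)
      qed
      have bound: "(1 - (cmod z)^2) powr \<alpha> * cmod (deriv D z) \<le> \<epsilon> / 2" if z: "z \<in> ball 0 1" for z
      proof (cases "cmod z \<le> \<rho>")
        case True
        have dh: "cmod (deriv h w) \<le> \<theta> / d" if w: "cmod w \<le> \<rho>" for w
        proof -
          have sub1: "cball w d \<subseteq> cball 0 \<rho>'"
          proof
            fix x assume "x \<in> cball w d"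
            then have "cmod x \<le> cmod w + d" using norm_triangle_ineq2[of x w] by (auto simp: dist_norm norm_minus_commute)
            then show "x \<in> cball 0 \<rho>'" using w \<rho>1 by auto
          qed
          have "norm ((deriv ^^ 1) h w) \<le> fact 1 * \<theta> / d ^ 1"
          proof (rule Cauchy_inequality)
            show "h holomorphic_on ball w d"
              by (rule holomorphic_on_subset[OF hh]) (use sub1 cb ball_subset_cball[of w d] in blast)
            show "continuous_on (cball w d) h"
              by (rule continuous_on_subset[OF holomorphic_on_imp_continuous_on[OF hh]]) (use sub1 cb in auto)
            show "0 < d" by (rule d0)
            fix x assume "cmod (w - x) = d"
            then have "x \<in> cball 0 \<rho>'" using sub1 by (auto simp: dist_norm)
            then show "cmod (h x) \<le> \<theta>" using no[OF n] by (auto simp: h_def less_imp_le)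
          qed
          then show ?thesis by simp
        qed
        have q1: "cmod (if z = 0 then deriv h 0 else h z / z) \<le> \<theta> / d"
        proof (cases "z = 0")
          case True then show ?thesis using dh[of 0] \<rho>1 by simp
        next
          case False
          have "cmod (h z) \<le> \<theta> / d * cmod z" by (rule mvt_zero[OF hh h0 \<rho>1(1) dh True])
          then show ?thesis using False by (simp add: norm_divide field_simps)
        qed
        have nz: "0 < cmod (1 - z)" using one_minus_norm_le[OF z] z by (simp only: mem_ball_0)
        have pw: "cmod (1 - z) powr (-\<beta>) \<le> L"
        proof -
          have "cmod (1 - z) powr (-\<beta>) \<le> 2 powr \<bar>\<beta>\<bar> * (1 - cmod z) powr (- max \<beta> 0)"
            by (rule pow_1mz_bound[OF z])
          also have "\<dots> \<le> L" unfolding L_def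
            by (intro mult_left_mono powr_mono2') (use True \<eta> in \<open>auto simp: \<rho>_def\<close>)
          finally show ?thesis .
        qed
        have "cmod (Qf \<beta> h z) = cmod (if z = 0 then deriv h 0 else h z / z) * cmod (1 - z) powr (-\<beta>)"
          unfolding Qf_def norm_divide by (simp only: norm_1mz_powr[OF z] powr_minus divide_inverse)
        also have "\<dots> \<le> \<theta> / d * L"
          using q1 pw \<theta>0 d0 by (intro mult_mono) auto
        also have "\<dots> = \<epsilon> / 4" using d0 L0 by (simp add: \<theta>_def)
        finally have "cmod (Qf \<beta> h z) \<le> \<epsilon> / 4" .
        then have "(1 - (cmod z)^2) powr \<alpha> * cmod (Qf \<beta> h z) \<le> 1 * (\<epsilon> / 4)"
          using weight_le1[OF z, of \<alpha>] gp by (intro mult_mono) auto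
        then show ?thesis using Dd[OF z] \<epsilon> by simp
      next
        case False
        then have z0: "z \<noteq> 0" using \<rho>1 by auto
        have sd: "(1 - cmod z) powr (del \<alpha> \<beta>) \<le> \<eta> powr (del \<alpha> \<beta>)"
          by (rule powr_mono2) (use gp False z in \<open>auto simp: \<rho>_def\<close>)
        have "(1 - (cmod z)^2) powr \<alpha> * cmod (deriv D z)
              = (1 - (cmod z)^2) powr \<alpha> * cmod (Qf \<beta> (s (r n)) z - Qf \<beta> f z)"
          using Dd[OF z] Qf_diff[OF sb(2) f1, of \<beta> "r n" z] by (simp add: h_def)
        also have "\<dots> \<le> (1 - (cmod z)^2) powr \<alpha> * cmod (Qf \<beta> (s (r n)) z) + (1 - (cmod z)^2) powr \<alpha> * cmod (Qf \<beta> f z)"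
          by (simp add: distrib_left[symmetric] mult_left_mono norm_triangle_ineq4)
        also have "\<dots> \<le> Cst \<alpha> \<beta> * M * (1 - cmod z) powr (del \<alpha> \<beta>) + Cst \<alpha> \<beta> * M * (1 - cmod z) powr (del \<alpha> \<beta>)"
        proof (rule add_mono)
          have "(1 - (cmod z)^2) powr \<alpha> * cmod (Qf \<beta> (s (r n)) z) \<le> Cst \<alpha> \<beta> * bloch_norm \<alpha> (s (r n)) * (1 - cmod z) powr (del \<alpha> \<beta>)"
            by (rule KL[OF g s z])
          also have "\<dots> \<le> Cst \<alpha> \<beta> * M * (1 - cmod z) powr (del \<alpha> \<beta>)"
            using M[of "r n"] gp by (intro mult_right_mono mult_left_mono) auto
          finally show "(1 - (cmod z)^2) powr \<alpha> * cmod (Qf \<beta> (s (r n)) z) \<le> Cst \<alpha> \<beta> * M * (1 - cmod z) powr (del \<alpha> \<beta>)" .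
          show "(1 - (cmod z)^2) powr \<alpha> * cmod (Qf \<beta> f z) \<le> Cst \<alpha> \<beta> * M * (1 - cmod z) powr (del \<alpha> \<beta>)"
            by (rule KLf[OF z z0])
        qed
        also have "\<dots> = (2 * Cst \<alpha> \<beta> * M) * (1 - cmod z) powr (del \<alpha> \<beta>)" by simp
        also have "\<dots> \<le> (2 * Cst \<alpha> \<beta> * M) * \<eta> powr (del \<alpha> \<beta>)"
          using sd gp M0 by (intro mult_left_mono) auto
        also have "\<dots> \<le> \<epsilon> / 2" using \<eta>(3) \<epsilon> by linarith
        finally show ?thesis .
      qed
      have "bloch_norm \<alpha> D \<le> \<epsilon> / 2" by (rule bloch_norm_le[OF bound])
      moreover have "0 \<le> bloch_norm \<alpha> D" by (rule bloch_nonneg[OF Dsp])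
      ultimately show "norm (bloch_norm \<alpha> (\<lambda>z. cesaro \<beta> (s (r n)) z - cesaro \<beta> f z) - 0) < \<epsilon>"
        using \<epsilon> by (simp add: D_def)
    qed
  qed
  show ?thesis using f2 fb conv by blast
qed

lemma zero_bloch0: "(\<lambda>z. 0) \<in> bloch0 \<alpha>" "bloch_norm \<alpha> (\<lambda>z. 0) = 0"
  by (auto simp: bloch0_def bloch_space_def bloch_norm_def)

lemma op_D1: "op_on_bloch0 \<alpha> T \<Longrightarrow> f \<in> bloch0 \<alpha> \<Longrightarrow> T f \<in> bloch0 \<alpha>"
  unfolding op_on_bloch0_def by blast

lemma op_D2: "op_on_bloch0 \<alpha> T \<Longrightarrow> f \<in> bloch0 \<alpha> \<Longrightarrow> g \<in> bloch0 \<alpha> \<Longrightarrow> \<forall>z\<in>ball 0 1. f z = g z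
   \<Longrightarrow> z \<in> ball 0 1 \<Longrightarrow> T f z = T g z"
  unfolding op_on_bloch0_def by blast

lemma op_D3: "op_on_bloch0 \<alpha> T \<Longrightarrow> f \<in> bloch0 \<alpha> \<Longrightarrow> g \<in> bloch0 \<alpha> \<Longrightarrow> z \<in> ball 0 1
   \<Longrightarrow> T (\<lambda>w. a * f w + b * g w) z = a * T f z + b * T g z"
  unfolding op_on_bloch0_def by blast

lemma cmult_op:
  assumes T: "op_on_bloch0 \<alpha> T"
  shows "op_on_bloch0 \<alpha> (\<lambda>f z. c * T f z)"
  unfolding op_on_bloch0_def
proof (intro conjI ballI allI impI)
  fix f assume f: "f \<in> bloch0 \<alpha>"
  have Tf: "T f \<in> bloch0 \<alpha>" by (rule op_D1[OF T f])
  have "(\<lambda>z. c * T f z + 0 * T f z) \<in> bloch0 \<alpha>" by (rule bloch0_lincomb[OF Tf Tf])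
  then show "(\<lambda>z. c * T f z) \<in> bloch0 \<alpha>" by simp
next
  fix f g :: "complex \<Rightarrow> complex" and z :: complex
  assume a1: "f \<in> bloch0 \<alpha>" and a2: "g \<in> bloch0 \<alpha>" and a3: "\<forall>z\<in>ball 0 1. f z = g z" and a4: "z \<in> ball 0 1"
  show "c * T f z = c * T g z" using op_D2[OF T a1 a2 a3 a4] by simp
next
  fix f g :: "complex \<Rightarrow> complex" and a b z :: complex
  assume "f \<in> bloch0 \<alpha>" "g \<in> bloch0 \<alpha>" "z \<in> ball 0 1"
  then have "T (\<lambda>w. a * f w + b * g w) z = a * T f z + b * T g z"
    by (rule op_D3[OF T])
  then show "c * T (\<lambda>w. a * f w + b * g w) z = a * (c * T f z) + b * (c * T g z)"
    by (simp add: algebra_simps)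
qed

lemma cesaro_cmult_compact:
  assumes g: "good \<alpha> \<beta>"
  shows "compact_op \<alpha> (\<lambda>f z. c * cesaro \<beta> f z)"
  unfolding compact_op_def
proof (intro conjI allI impI)
  show "op_on_bloch0 \<alpha> (\<lambda>f z. c * cesaro \<beta> f z)" by (rule cmult_op[OF cesaro_op[OF g]])
next
  fix s :: "nat \<Rightarrow> complex \<Rightarrow> complex"
  assume "(\<forall>n. s n \<in> bloch0 \<alpha>) \<and> (\<exists>M. \<forall>n. bloch_norm \<alpha> (s n) \<le> M)"
  then obtain M where s: "\<And>n. s n \<in> bloch0 \<alpha>" and M: "\<And>n. bloch_norm \<alpha> (s n) \<le> M" by blast
  obtain r f where r: "strict_mono r" and fb: "cesaro \<beta> f \<in> bloch0 \<alpha>"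
    and lim: "(\<lambda>n. bloch_norm \<alpha> (\<lambda>z. cesaro \<beta> (s (r n)) z - cesaro \<beta> f z)) \<longlonglongrightarrow> 0"
    using cesaro_compact_seq[of \<alpha> \<beta> s M, OF g s M] by (elim exE conjE) (rule that; assumption)
  define G where "G = (\<lambda>z. c * cesaro \<beta> f z)"
  have Gb: "G \<in> bloch0 \<alpha>"
  proof -
    have "(\<lambda>z. c * cesaro \<beta> f z + 0 * cesaro \<beta> f z) \<in> bloch0 \<alpha>" by (rule bloch0_lincomb[OF fb fb])
    then show ?thesis by (simp add: G_def)
  qed
  define D where "D n = (\<lambda>z. cesaro \<beta> (s (r n)) z - cesaro \<beta> f z)" for n
  have Dsp: "D n \<in> bloch_space \<alpha>" for n
  proof -
    have "(\<lambda>z. 1 * cesaro \<beta> (s (r n)) z + (-1) * cesaro \<beta> f z) \<in> bloch_space \<alpha>"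
      by (rule bloch_lincomb(1)) (use cesaro_bloch0(1)[OF g s] fb in \<open>auto simp: bloch0_def\<close>)
    then show ?thesis by (simp add: D_def)
  qed
  have eq: "(\<lambda>z. c * cesaro \<beta> (s (r n)) z - G z) = (\<lambda>z. c * D n z + 0 * D n z)" for n
    by (rule ext) (simp add: D_def G_def right_diff_distrib)
  have up: "bloch_norm \<alpha> (\<lambda>z. c * cesaro \<beta> (s (r n)) z - G z) \<le> cmod c * bloch_norm \<alpha> (D n)" for n
    unfolding eq using bloch_lincomb(2)[OF Dsp[of n] Dsp[of n], of c 0] by simp
  have lo: "0 \<le> bloch_norm \<alpha> (\<lambda>z. c * cesaro \<beta> (s (r n)) z - G z)" for n
    unfolding eq by (rule bloch_nonneg, rule bloch_lincomb(1)[OF Dsp[of n] Dsp[of n]])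
  have h0: "(\<lambda>n. cmod c * bloch_norm \<alpha> (D n)) \<longlonglongrightarrow> cmod c * 0"
    by (intro tendsto_mult tendsto_const) (simp add: D_def lim)
  have e1: "\<forall>\<^sub>F n in sequentially. (0::real) \<le> bloch_norm \<alpha> (\<lambda>z. c * cesaro \<beta> (s (r n)) z - G z)"
    by (rule always_eventually) (use lo in blast)
  have e2: "\<forall>\<^sub>F n in sequentially. bloch_norm \<alpha> (\<lambda>z. c * cesaro \<beta> (s (r n)) z - G z) \<le> cmod c * bloch_norm \<alpha> (D n)"
    by (rule always_eventually) (use up in blast)
  have "(\<lambda>n. bloch_norm \<alpha> (\<lambda>z. c * cesaro \<beta> (s (r n)) z - G z)) \<longlonglongrightarrow> 0"
    using tendsto_sandwich[OF e1 e2 tendsto_const] h0 by simp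
  then show "\<exists>r g. strict_mono r \<and> g \<in> bloch0 \<alpha> \<and>
           (\<lambda>n. bloch_norm \<alpha> (\<lambda>z. c * cesaro \<beta> (s (r n)) z - g z)) \<longlonglongrightarrow> 0"
    using r Gb by blast
qed

lemma sum_bloch_space:
  assumes "u \<in> bloch0 \<alpha>" "v \<in> bloch0 \<alpha>"
  shows "(\<lambda>z. u z + v z) \<in> bloch_space \<alpha>"
    "bloch_norm \<alpha> (\<lambda>z. u z + v z) \<le> bloch_norm \<alpha> u + bloch_norm \<alpha> v"
proof -
  have us: "u \<in> bloch_space \<alpha>" and vs: "v \<in> bloch_space \<alpha>" using assms by (auto simp: bloch0_def)
  have e: "(\<lambda>z. u z + v z) = (\<lambda>z. 1 * u z + 1 * v z)" by simp
  show "(\<lambda>z. u z + v z) \<in> bloch_space \<alpha>" unfolding e by (rule bloch_lincomb(1)[OF us vs])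
  show "bloch_norm \<alpha> (\<lambda>z. u z + v z) \<le> bloch_norm \<alpha> u + bloch_norm \<alpha> v"
    unfolding e using bloch_lincomb(2)[OF us vs, of 1 1] by simp
qed

lemma K_bound:
  assumes "k \<in> bloch0 \<alpha>" "g \<in> bloch0 \<alpha>"
  shows "bloch_norm \<alpha> k \<le> bloch_norm \<alpha> (\<lambda>z. k z - g z) + bloch_norm \<alpha> g"
proof -
  have ks: "k \<in> bloch_space \<alpha>" and gs: "g \<in> bloch_space \<alpha>" using assms by (auto simp: bloch0_def)
  have e0: "(\<lambda>z. k z - g z) = (\<lambda>z. 1 * k z + (-1) * g z)" by simp
  have ds: "(\<lambda>z. k z - g z) \<in> bloch_space \<alpha>" unfolding e0 by (rule bloch_lincomb(1)[OF ks gs])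
  have e: "k = (\<lambda>z. 1 * (k z - g z) + 1 * g z)" by simp
  have "bloch_norm \<alpha> (\<lambda>z. 1 * (k z - g z) + 1 * g z) \<le> cmod 1 * bloch_norm \<alpha> (\<lambda>z. k z - g z) + cmod 1 * bloch_norm \<alpha> g"
    by (rule bloch_lincomb(2)[OF ds gs])
  then show ?thesis using e by simp
qed

lemma op_norm_nonneg:
  assumes T: "bounded_op \<alpha> T" and K: "compact_op \<alpha> K"
  shows "0 \<le> op_norm \<alpha> (\<lambda>f z. T f z + K f z)"
proof -
  define S where "S = {bloch_norm \<alpha> (\<lambda>z. T f z + K f z) | f. f \<in> bloch0 \<alpha> \<and> bloch_norm \<alpha> f \<le> 1}"
  have Top: "op_on_bloch0 \<alpha> T" using T by (simp add: bounded_op_def)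
  have Kop: "op_on_bloch0 \<alpha> K" using K by (simp add: compact_op_def)
  obtain C where C: "\<And>f. f \<in> bloch0 \<alpha> \<Longrightarrow> bloch_norm \<alpha> (T f) \<le> C * bloch_norm \<alpha> f"
    using T unfolding bounded_op_def by blast
  have nn: "0 \<le> bloch_norm \<alpha> (\<lambda>z. T f z + K f z)" if "f \<in> bloch0 \<alpha>" for f
    by (rule bloch_nonneg, rule sum_bloch_space(1)[OF op_D1[OF Top that] op_D1[OF Kop that]])
  have mem: "bloch_norm \<alpha> (\<lambda>z. T (\<lambda>z. 0) z + K (\<lambda>z. 0) z) \<in> S"
    unfolding S_def using zero_bloch0[of \<alpha>] by auto
  have bdd: "bdd_above S"
  proof (rule ccontr)
    assume nb: "\<not> bdd_above S"
    have "\<exists>f. f \<in> bloch0 \<alpha> \<and> bloch_norm \<alpha> f \<le> 1 \<and> real n < bloch_norm \<alpha> (\<lambda>z. T f z + K f z)" for n :: nat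
    proof -
      from nb have "\<not> (\<forall>x\<in>S. x \<le> real n)" by (auto simp: bdd_above_def)
      then show ?thesis unfolding S_def by auto
    qed
    then obtain s where s: "\<And>n. s n \<in> bloch0 \<alpha>" "\<And>n. bloch_norm \<alpha> (s n) \<le> 1"
      "\<And>n. real n < bloch_norm \<alpha> (\<lambda>z. T (s n) z + K (s n) z)"
      by metis
    have "(\<forall>n. s n \<in> bloch0 \<alpha>) \<and> (\<exists>M. \<forall>n. bloch_norm \<alpha> (s n) \<le> M)" using s by blast
    then obtain r g where r: "strict_mono r" and g: "g \<in> bloch0 \<alpha>"
      and lim: "(\<lambda>n. bloch_norm \<alpha> (\<lambda>z. K (s (r n)) z - g z)) \<longlonglongrightarrow> 0"
      using K unfolding compact_op_def by blast
    obtain N where N: "\<And>n. N \<le> n \<Longrightarrow> norm (bloch_norm \<alpha> (\<lambda>z. K (s (r n)) z - g z) - 0) < 1"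
      using LIMSEQ_D[OF lim, of 1] by auto
    define B where "B = \<bar>C\<bar> + 1 + bloch_norm \<alpha> g"
    define n where "n = max N (nat \<lceil>B\<rceil>)"
    define f where "f = s (r n)"
    have fb: "f \<in> bloch0 \<alpha>" "bloch_norm \<alpha> f \<le> 1" using s by (auto simp: f_def)
    have f0: "0 \<le> bloch_norm \<alpha> f" using fb by (intro bloch_nonneg) (auto simp: bloch0_def)
    have "bloch_norm \<alpha> (\<lambda>z. T f z + K f z) \<le> bloch_norm \<alpha> (T f) + bloch_norm \<alpha> (K f)"
      by (rule sum_bloch_space(2)[OF op_D1[OF Top fb(1)] op_D1[OF Kop fb(1)]])
    also have "\<dots> \<le> \<bar>C\<bar> + (1 + bloch_norm \<alpha> g)"
    proof (rule add_mono)
      have "bloch_norm \<alpha> (T f) \<le> C * bloch_norm \<alpha> f" by (rule C[OF fb(1)])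
      also have "\<dots> \<le> \<bar>C\<bar> * bloch_norm \<alpha> f" using f0 by (intro mult_right_mono) auto
      also have "\<dots> \<le> \<bar>C\<bar> * 1" using fb(2) by (intro mult_left_mono) auto
      finally show "bloch_norm \<alpha> (T f) \<le> \<bar>C\<bar>" by simp
      have "bloch_norm \<alpha> (K f) \<le> bloch_norm \<alpha> (\<lambda>z. K f z - g z) + bloch_norm \<alpha> g"
        by (rule K_bound[OF op_D1[OF Kop fb(1)] g])
      also have "bloch_norm \<alpha> (\<lambda>z. K f z - g z) \<le> 1"
        using N[of n] by (simp add: f_def n_def)
      finally show "bloch_norm \<alpha> (K f) \<le> 1 + bloch_norm \<alpha> g" by simp
    qed
    also have "\<dots> = B" by (simp add: B_def)
    also have "B \<le> real n" unfolding n_def by linarith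
    also have "real n \<le> real (r n)" using seq_suble[OF r, of n] by simp
    also have "real (r n) < bloch_norm \<alpha> (\<lambda>z. T f z + K f z)" unfolding f_def by (rule s(3))
    finally show False by simp
  qed
  have "0 \<le> bloch_norm \<alpha> (\<lambda>z. T (\<lambda>z. 0) z + K (\<lambda>z. 0) z)" by (rule nn[OF zero_bloch0(1)])
  also have "\<dots> \<le> Sup S" by (rule cSup_upper[OF mem bdd])
  finally show ?thesis by (simp add: op_norm_def S_def)
qed

lemma good_from:
  assumes "\<alpha> > 0"
    and "(\<beta> < \<alpha> \<and> \<alpha> < 1) \<or> (\<beta> < 1 \<and> 1 < \<alpha>) \<or> (\<beta> < \<alpha> \<and> \<alpha> = 1)"
  shows "good \<alpha> \<beta>"
  using assms unfolding good_def by (cases "\<beta> \<le> 0"; cases "\<alpha> \<le> 1") (auto simp: max_def)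

theorem theorem4p3:
  fixes \<alpha> \<beta> :: real
  assumes "\<alpha> > 0"
    and "(\<beta> < \<alpha> \<and> \<alpha> < 1) \<or> (\<beta> < 1 \<and> 1 < \<alpha>) \<or> (\<beta> < \<alpha> \<and> \<alpha> = 1)"
  shows "bounded_op \<alpha> (cesaro \<beta>) \<and> ess_norm \<alpha> (cesaro \<beta>) = 0"
proof -
  have g: "good \<alpha> \<beta>" by (rule good_from[OF assms])
  have b: "bounded_op \<alpha> (cesaro \<beta>)" by (rule cesaro_bounded[OF g])
  define K0 where "K0 = (\<lambda>f z. (-1) * cesaro \<beta> f z)"
  have K0c: "compact_op \<alpha> K0" unfolding K0_def by (rule cesaro_cmult_compact[OF g])
  have on0: "op_norm \<alpha> (\<lambda>f z. cesaro \<beta> f z + K0 f z) = 0"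
  proof -
    have "{bloch_norm \<alpha> ((\<lambda>f z. cesaro \<beta> f z + K0 f z) f) | f. f \<in> bloch0 \<alpha> \<and> bloch_norm \<alpha> f \<le> 1} = {0}"
      using zero_bloch0[of \<alpha>] by (auto simp: K0_def)
    then show ?thesis by (simp add: op_norm_def)
  qed
  have "ess_norm \<alpha> (cesaro \<beta>) = 0"
    unfolding ess_norm_def
  proof (rule cInf_eq_minimum)
    show "0 \<in> {op_norm \<alpha> (\<lambda>f z. cesaro \<beta> f z + K f z) | K. compact_op \<alpha> K}"
      using K0c on0 by force
    fix x assume "x \<in> {op_norm \<alpha> (\<lambda>f z. cesaro \<beta> f z + K f z) | K. compact_op \<alpha> K}"
    then obtain K where K: "compact_op \<alpha> K" and x: "x = op_norm \<alpha> (\<lambda>f z. cesaro \<beta> f z + K f z)" by blast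
    show "0 \<le> x" unfolding x by (rule op_norm_nonneg[OF b K])
  qed
  with b show ?thesis by blast
qed

end
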